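(* Let $\sigma$ be a regular expression having the HOMOGENEITY property with constant $D_\sigma$, let $C_\sigma$ be the integer such that for every $n\ge1$ the maximum number of $\sigma$-patterns among time series of length $n$ equals $\max(0,\lfloor (n-C_\sigma)/D_\sigma\rfloor)$, and let $\gamma(X,R)$ be the constraint $\mathrm{nb}\_\sigma(X,R)$. Then the gap-to-loss condition is satisfied for $\gamma$, and for every ground time series $X$ of length $n$, $$\mathrm{Loss}_\gamma(X)=\mathrm{Gap}_\gamma(X)\cdot D_\sigma+(1-\mathrm{sgn}(R))\cdot(\min(n,C_\sigma)-1)+\max(0,n-C_\sigma)\bmod D_\sigma.$$
   Context: Signature of $X=\langle X_1,\dots,X_n\rangle$: the word $\langle S_1,\dots,S_{n-1}\rangle$ over $\Sigma=\{<,=,>\}$ with $S_i$ given by comparing $X_i$ and $X_{i+1}$. For $\sigma$ with integer constants $b_\sigma,a_\sigma$, whenever $\langle S_i,\dots,S_j\rangle$ is a maximal word matching $\sigma$, $\langle X_{i+b_\sigma},\dots,X_{j+1-a_\sigma}\rangle$ is a $\sigma$-pattern; $\mathrm{nb}\_\sigma(X,R)$ holds iff $R$ is the number of $\sigma$-patterns of $X$. Ground time series: fixed non-empty integer sequence. $\mathrm{Gap}_\gamma(X)$: maximum value of $R$ over time series of length $n$ minus the value of $R$ for $X$. $\mathrm{Loss}_\gamma(X)$: $n$ minus the length of a shortest time series with the same value of $R$. $\mathrm{sgn}$: signum. Gap-to-loss condition: there is a function $h$ with $\mathrm{Loss}_\gamma(X)=h(\mathrm{Gap}_\gamma(X),\mathrm{sgn}(R),n)$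 for all ground $X$ of length $n$. Seed transducer for $\sigma$: a deterministic finite transducer whose transitions are labelled by an input symbol in $\Sigma$ and an output symbol in $\{\mathtt{found},\mathtt{not\_found}\}$, such that on the signature of any time series the $\mathtt{found}$ outputs correspond bijectively to the $\sigma$-patterns (each $\mathtt{found}$ marks the discovery of a new maximal occurrence of $\sigma$). A $\mathtt{found}$-transition is one with output $\mathtt{found}$; a $\mathtt{found}$-path is a sequence of consecutive transitions containing at least one $\mathtt{found}$-transition, its length being its number of transitions. HOMOGENEITY property: (1) a seed transducer $T_\sigma$ for $\sigma$ exists (the paper phrases this as $\langle\sigma,b_\sigma\rangle$ being a recognisable pattern); (2) for every state of $T_\sigma$ that is the destination of a $\mathtt{found}$-transition, the length of the shortest $\mathtt{found}$-path starting from it is the same constant, denoted $D_\sigma$. *)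

theory Defs
  imports Main
begin

datatype sym = Lt | Eq | Gt

definition cmp :: "int \<Rightarrow> int \<Rightarrow> sym" where
  "cmp a b = (if a < b then Lt else if a = b then Eq else Gt)"

definition signature :: "int list \<Rightarrow> sym list" where
  "signature X = map2 cmp X (tl X)"

datatype rexp = Zero | One | Atom sym | Alt rexp rexp | Conc rexp rexp | Star rexp

inductive_set star_lang :: "sym list set \<Rightarrow> sym list set" for A where
  star_nil: "[] \<in> star_lang A"
| star_app: "u \<in> A \<Longrightarrow> v \<in> star_lang A \<Longrightarrow> u @ v \<in> star_lang A"

fun lang :: "rexp \<Rightarrow> sym list set" where
  "lang Zero = {}"
| "lang One = {[]}"
| "lang (Atom s) = {[s]}"
| "lang (Alt r1 r2) = lang r1 \<union> lang r2"
| "lang (Conc r1 r2) = {u @ v | u v. u \<in> lang r1 \<and> v \<in> lang r2}"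
| "lang (Star r) = star_lang (lang r)"

definition occ :: "rexp \<Rightarrow> sym list \<Rightarrow> (nat \<times> nat) set" where
  "occ \<sigma> w = {(i, j). i \<le> j \<and> j < length w \<and> take (j - i + 1) (drop i w) \<in> lang \<sigma>}"

definition max_occ :: "rexp \<Rightarrow> sym list \<Rightarrow> (nat \<times> nat) set" where
  "max_occ \<sigma> w = {(i, j). (i, j) \<in> occ \<sigma> w \<and>
      (\<forall>i' j'. (i', j') \<in> occ \<sigma> w \<and> i' \<le> i \<and> j \<le> j' \<longrightarrow> (i', j') = (i, j))}"

text \<open>Number of sigma-patterns of X: one pattern per maximal occurrence in the signature.\<close>
definition nb :: "rexp \<Rightarrow> int list \<Rightarrow> nat" where
  "nb \<sigma> X = card (max_occ \<sigma> (signature X))"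

definition nb_constraint :: "rexp \<Rightarrow> int list \<Rightarrow> nat \<Rightarrow> bool" where
  "nb_constraint \<sigma> X R \<longleftrightarrow> R = nb \<sigma> X"

definition ground :: "int list \<Rightarrow> bool" where
  "ground X \<longleftrightarrow> X \<noteq> []"

definition maxR :: "rexp \<Rightarrow> nat \<Rightarrow> nat" where
  "maxR \<sigma> n = Max {nb \<sigma> Y | Y. length Y = n}"

definition Gap :: "rexp \<Rightarrow> int list \<Rightarrow> int" where
  "Gap \<sigma> X = int (maxR \<sigma> (length X)) - int (nb \<sigma> X)"

definition Loss :: "rexp \<Rightarrow> int list \<Rightarrow> int" where
  "Loss \<sigma> X = int (length X) -
     int (LEAST k. \<exists>Y. ground Y \<and> length Y = k \<and> nb \<sigma> Y = nb \<sigma> X)"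

definition gap_to_loss :: "rexp \<Rightarrow> bool" where
  "gap_to_loss \<sigma> \<longleftrightarrow> (\<exists>h :: int \<Rightarrow> int \<Rightarrow> nat \<Rightarrow> int.
     \<forall>X. ground X \<longrightarrow> Loss \<sigma> X = h (Gap \<sigma> X) (sgn (int (nb \<sigma> X))) (length X))"

text \<open>A deterministic finite transducer: finite state set Q, initial state q0,
  transition function delta mapping a state and input symbol to the next state
  and an output flag (True = found, False = not_found).\<close>
fun outs :: "(nat \<Rightarrow> sym \<Rightarrow> nat \<times> bool) \<Rightarrow> nat \<Rightarrow> sym list \<Rightarrow> bool list" where
  "outs \<delta> q [] = []"
| "outs \<delta> q (s # w) = snd (\<delta> q s) # outs \<delta> (fst (\<delta> q s)) w"

definition found_positions :: "(nat \<Rightarrow> sym \<Rightarrow> nat \<times> bool) \<Rightarrow> nat \<Rightarrow> sym list \<Rightarrow> nat set" where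
  "found_positions \<delta> q0 w = {k. k < length w \<and> outs \<delta> q0 w ! k}"

definition seed_transducer ::
  "rexp \<Rightarrow> nat set \<Rightarrow> nat \<Rightarrow> (nat \<Rightarrow> sym \<Rightarrow> nat \<times> bool) \<Rightarrow> bool" where
  "seed_transducer \<sigma> Q q0 \<delta> \<longleftrightarrow>
     finite Q \<and> q0 \<in> Q \<and> (\<forall>q\<in>Q. \<forall>s. fst (\<delta> q s) \<in> Q) \<and>
     (\<forall>X :: int list. \<exists>f. bij_betw f (found_positions \<delta> q0 (signature X))
                                       (max_occ \<sigma> (signature X)))"

definition found_path :: "(nat \<Rightarrow> sym \<Rightarrow> nat \<times> bool) \<Rightarrow> nat \<Rightarrow> sym list \<Rightarrow> bool" where
  "found_path \<delta> q w \<longleftrightarrow> True \<in> set (outs \<delta> q w)"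

definition homogeneous :: "rexp \<Rightarrow> nat \<Rightarrow> bool" where
  "homogeneous \<sigma> D \<longleftrightarrow> (\<exists>Q q0 \<delta>. seed_transducer \<sigma> Q q0 \<delta> \<and>
     (\<forall>q\<in>Q. \<forall>s. snd (\<delta> q s) \<longrightarrow>
        (let q' = fst (\<delta> q s) in
          (\<exists>w. found_path \<delta> q' w \<and> length w = D) \<and>
          (\<forall>w. found_path \<delta> q' w \<longrightarrow> D \<le> length w))))"

end

theory Submission
  imports Defs
begin

lemma nb_bound: "nb \<sigma> Y \<le> length Y * length Y"
proof -
  let ?w = "signature Y"
  have lw: "length ?w \<le> length Y" by (simp add: signature_def)
  have "max_occ \<sigma> ?w \<subseteq> {..<length ?w} \<times> {..<length ?w}"
    by (auto simp: max_occ_def occ_def)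
  hence "card (max_occ \<sigma> ?w) \<le> card ({..<length ?w} \<times> {..<length ?w})"
    by (intro card_mono) auto
  also have "\<dots> = length ?w * length ?w" by (simp add: card_cartesian_product)
  also have "\<dots> \<le> length Y * length Y" using lw by (simp add: mult_le_mono)
  finally show ?thesis by (simp add: nb_def)
qed

lemma fin_set: "finite {nb \<sigma> Y | Y. length Y = n}"
proof (rule finite_subset[of _ "{..n*n}"])
  show "{nb \<sigma> Y | Y. length Y = n} \<subseteq> {..n*n}" using nb_bound by fastforce
qed auto

lemma nb_le_maxR: "length Y = n \<Longrightarrow> nb \<sigma> Y \<le> maxR \<sigma> n"
  unfolding maxR_def by (rule Max_ge[OF fin_set]) auto

lemma maxR_att: "\<exists>Y. length Y = n \<and> nb \<sigma> Y = maxR \<sigma> n"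
proof -
  have ne: "{nb \<sigma> Y | Y. length Y = n} \<noteq> {}"
    using length_replicate[of n "0::int"] by blast
  have "maxR \<sigma> n \<in> {nb \<sigma> Y | Y. length Y = n}"
    unfolding maxR_def by (rule Max_in[OF fin_set ne])
  thus ?thesis by auto
qed

lemma nb_single: "nb \<sigma> [a] = 0"
  by (simp add: nb_def signature_def max_occ_def occ_def)

lemma main:
  fixes \<sigma> :: rexp and D :: nat and C :: int
  assumes maxC: "\<forall>n::nat. n \<ge> 1 \<longrightarrow> int (maxR \<sigma> n) = max 0 ((int n - C) div int D)"
    and g: "ground X"
  shows "Loss \<sigma> X = Gap \<sigma> X * int D
         + (1 - sgn (int (nb \<sigma> X))) * (min (int (length X)) C - 1)
         + max 0 (int (length X) - C) mod int D"
proof -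
  define n where "n = length X"
  define R where "R = nb \<sigma> X"
  have n1: "n \<ge> 1" using g by (cases X) (auto simp: ground_def n_def)
  have Rle: "R \<le> maxR \<sigma> n" using nb_le_maxR R_def n_def by blast
  have mn: "int (maxR \<sigma> n) = max 0 ((int n - C) div int D)" using maxC n1 by blast
  show ?thesis
  proof (cases "R = 0")
    case True
    have L: "(LEAST k. \<exists>Y. ground Y \<and> length Y = k \<and> nb \<sigma> Y = nb \<sigma> X) = 1"
    proof (rule Least_equality)
      show "\<exists>Y. ground Y \<and> length Y = 1 \<and> nb \<sigma> Y = nb \<sigma> X"
        using True R_def nb_single[of \<sigma> 0] by (intro exI[of _ "[0]"]) (auto simp: ground_def)
      show "\<And>k. \<exists>Y. ground Y \<and> length Y = k \<and> nb \<sigma> Y = nb \<sigma> X \<Longrightarrow> 1 \<le> k"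
        by (auto simp: ground_def Suc_le_eq)
    qed
    have G: "Gap \<sigma> X = max 0 ((int n - C) div int D)"
      using mn True by (simp add: Gap_def R_def n_def)
    have "max 0 ((int n - C) div int D) * int D + max 0 (int n - C) mod int D
          = max 0 (int n - C)"
    proof (cases "int n - C \<ge> 0")
      case True
      have "0 \<le> (int n - C) div int D" using True by (simp add: div_int_pos_iff)
      thus ?thesis using True div_mult_mod_eq[of "int n - C" "int D"] by simp
    next
      case False
      have "(int n - C) div int D \<le> 0"
        using False by (cases "D = 0") (simp_all add: div_nonpos_pos_le0)
      thus ?thesis using False by simp
    qed
    hence E: "Gap \<sigma> X * int D + max 0 (int (length X) - C) mod int D = max 0 (int (length X) - C)"
      using G n_def by simp
    have s0: "sgn (int (nb \<sigma> X)) = 0" using True R_def by simp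
    have "max 0 (int (length X) - C) + (min (int (length X)) C - 1) = int (length X) - 1"
      by (simp add: max_def min_def)
    thus ?thesis unfolding Loss_def L s0 using E by (simp only: of_nat_1 diff_zero mult_1)
  next
    case False
    hence Rp: "R \<ge> 1" by simp
    have Dp: "D > 0"
    proof (rule ccontr)
      assume "\<not> D > 0" hence "maxR \<sigma> n = 0" using mn by simp
      thus False using Rle Rp by simp
    qed
    have m1: "maxR \<sigma> 1 = 0"
      using maxR_att[of 1 \<sigma>] nb_single by (auto simp: length_Suc_conv)
    hence "max 0 ((1 - C) div int D) = 0" using maxC by force
    hence "(1 - C) div int D \<le> 0" by simp
    hence C1: "1 - C < int D"
    proof -
      assume a: "(1 - C) div int D \<le> 0"
      show ?thesis
      proof (rule ccontr)
        assume "\<not> 1 - C < int D"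
        hence "int D div int D \<le> (1 - C) div int D" using Dp by (intro zdiv_mono1) auto
        thus False using Dp a by simp
      qed
    qed
    define k0 where "k0 = C + int R * int D"
    have "int R * int D \<ge> int D" using Rp Dp by simp
    hence k0ge: "k0 \<ge> 1" using C1 k0_def by linarith
    have Q: "(int n - C) div int D \<ge> int R" using mn Rle Rp by (auto simp: max_def split: if_splits)
    have Qm: "(int n - C) div int D * int D \<le> int n - C"
      using div_mult_mod_eq[of "int n - C" "int D"] pos_mod_sign[of "int D" "int n - C"] Dp by linarith
    have "int R * int D \<le> (int n - C) div int D * int D" using Q Dp by simp
    hence k0n: "k0 \<le> int n" using Qm k0_def by linarith
    have L: "(LEAST k. \<exists>Y. ground Y \<and> length Y = k \<and> nb \<sigma> Y = nb \<sigma> X) = nat k0"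
    proof (rule Least_equality)
      have "int (maxR \<sigma> (nat k0)) = max 0 ((k0 - C) div int D)" using maxC k0ge by force
      also have "\<dots> = int R" using Dp k0_def by simp
      finally have "maxR \<sigma> (nat k0) = R" by simp
      then obtain Y where "length Y = nat k0" "nb \<sigma> Y = R" using maxR_att by metis
      thus "\<exists>Y. ground Y \<and> length Y = nat k0 \<and> nb \<sigma> Y = nb \<sigma> X"
        using k0ge R_def by (intro exI[of _ Y]) (auto simp: ground_def)
    next
      fix k assume "\<exists>Y. ground Y \<and> length Y = k \<and> nb \<sigma> Y = nb \<sigma> X"
      then obtain Y where Y: "ground Y" "length Y = k" "nb \<sigma> Y = R" using R_def by blast
      have "k \<ge> 1" using Y by (cases Y) (auto simp: ground_def)
      hence "int (maxR \<sigma> k) = max 0 ((int k - C) div int D)" using maxC by blast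
      moreover have "R \<le> maxR \<sigma> k" using nb_le_maxR Y by metis
      ultimately have "(int k - C) div int D \<ge> int R" using Rp by (auto simp: max_def split: if_splits)
      hence "int R * int D \<le> (int k - C) div int D * int D" using Dp by simp
      also have "\<dots> \<le> int k - C"
        using div_mult_mod_eq[of "int k - C" "int D"] pos_mod_sign[of "int D" "int k - C"] Dp by linarith
      finally show "nat k0 \<le> k" using k0_def by linarith
    qed
    have G: "Gap \<sigma> X = (int n - C) div int D - int R"
      using mn Q Rp by (simp add: Gap_def R_def n_def)
    have sg: "sgn (int R) = 1" using Rp by simp
    have "int R * int D \<ge> 0" by simp
    hence "0 \<le> int n - C" using k0n k0_def by linarith
    hence nc: "max 0 (int n - C) = int n - C" by simp
    have "Gap \<sigma> X * int D + max 0 (int n - C) mod int D = int n - k0"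
      unfolding G nc k0_def using div_mult_mod_eq[of "int n - C" "int D"]
      by (simp add: algebra_simps)
    thus ?thesis unfolding Loss_def L using sg k0ge R_def n_def by simp
  qed
qed

theorem theorem5:
  fixes \<sigma> :: rexp and D :: nat and C :: int
  assumes hom: "homogeneous \<sigma> D"
    and maxC: "\<forall>n::nat. n \<ge> 1 \<longrightarrow> int (maxR \<sigma> n) = max 0 ((int n - C) div int D)"
  shows "gap_to_loss \<sigma> \<and>
    (\<forall>X. ground X \<longrightarrow>
       Loss \<sigma> X = Gap \<sigma> X * int D
         + (1 - sgn (int (nb \<sigma> X))) * (min (int (length X)) C - 1)
         + max 0 (int (length X) - C) mod int D)"
proof
  show 2: "\<forall>X. ground X \<longrightarrow>
       Loss \<sigma> X = Gap \<sigma> X * int D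
         + (1 - sgn (int (nb \<sigma> X))) * (min (int (length X)) C - 1)
         + max 0 (int (length X) - C) mod int D"
    using main[OF maxC] by blast
  show "gap_to_loss \<sigma>"
    unfolding gap_to_loss_def
    by (rule exI[of _ "\<lambda>g s n. g * int D + (1 - s) * (min (int n) C - 1) + max 0 (int n - C) mod int D"])
       (use 2 in auto)
qed

end
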